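(* Let $\gamma\ge0$ be an integer. Then $$\omega_m^2C_{\gamma\gamma\gamma\gamma}-2\omega_\gamma^2C_{\gamma\gamma mm}\neq0\quad\text{for all integers } m\ge2\gamma+1,$$ and $D_{\gamma n}\ne0$ for all $n\in\{0,1,\dots,\gamma-1\}$, where $$D_{\gamma n}=\left[\omega_n^2C_{\gamma\gamma\gamma\gamma}-2\omega_\gamma^2C_{\gamma\gamma nn}\right]\left[\omega_{2\gamma-n}^2C_{\gamma\gamma\gamma\gamma}-2\omega_\gamma^2C_{\gamma,\gamma,2\gamma-n,2\gamma-n}\right]-\left[\omega_\gamma^2C_{\gamma,2\gamma-n,\gamma,n}\right]^2.$$
   Context: $\omega_n=n+1$ and $C_{ijkm}=\frac{2}{\pi}\int_{-1}^1U_i(y)U_j(y)U_k(y)U_m(y)\sqrt{1-y^2}\,dy$, where $U_n$ is the Chebyshev polynomial of the second kind of degree $n$ (equivalently $C_{ijkm}=\frac2\pi\int_0^\pi e_ie_je_ke_m\sin^2x\,dx$ with $e_n(x)=U_n(\cos x)$). *)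

theory Defs
  imports "HOL-Analysis.Analysis"
begin

fun chebU :: "nat \<Rightarrow> real \<Rightarrow> real" where
  "chebU 0 y = 1"
| "chebU (Suc 0) y = 2 * y"
| "chebU (Suc (Suc n)) y = 2 * y * chebU (Suc n) y - chebU n y"

definition omega :: "nat \<Rightarrow> real" where
  "omega n = real n + 1"

definition Ccoef :: "nat \<Rightarrow> nat \<Rightarrow> nat \<Rightarrow> nat \<Rightarrow> real" where
  "Ccoef i j k m = 2 / pi * integral {-1..1}
     (\<lambda>y. chebU i y * chebU j y * chebU k y * chebU m y * sqrt (1 - y\<^sup>2))"

definition Dcoef :: "nat \<Rightarrow> nat \<Rightarrow> real" where
  "Dcoef g n =
     (omega n ^ 2 * Ccoef g g g g - 2 * omega g ^ 2 * Ccoef g g n n)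
     * (omega (2*g - n) ^ 2 * Ccoef g g g g - 2 * omega g ^ 2 * Ccoef g g (2*g - n) (2*g - n))
     - (omega g ^ 2 * Ccoef g (2*g - n) g n) ^ 2"

end

theory Submission
  imports Defs
begin

lemma chebU_SS: "chebU (Suc (Suc n)) y = 2 * y * chebU (Suc n) y - chebU n y" by simp

lemma chebU_cos_step:
  assumes "chebU n (cos t) * sin t = sin ((real n + 1) * t)"
      and "chebU (Suc n) (cos t) * sin t = sin ((real n + 2) * t)"
  shows "chebU (Suc (Suc n)) (cos t) * sin t = sin ((real n + 3) * t)"
proof -
  have e: "sin ((real n + 3) * t) = 2 * cos t * sin ((real n + 2) * t) - sin ((real n + 1) * t)"
  proof -
    have a: "(real n + 3) * t = (real n + 2) * t + t" and b: "(real n + 1) * t = (real n + 2) * t - t"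
      by (simp_all add: algebra_simps)
    show ?thesis unfolding a b sin_add sin_diff by (simp add: algebra_simps)
  qed
  have "chebU (Suc (Suc n)) (cos t) * sin t
      = 2 * cos t * (chebU (Suc n) (cos t) * sin t) - chebU n (cos t) * sin t"
    by (simp add: algebra_simps)
  also have "\<dots> = 2 * cos t * sin ((real n + 2) * t) - sin ((real n + 1) * t)"
    using assms by simp
  finally show ?thesis using e by simp
qed

lemma chebU_cos2: "chebU k (cos t) * sin t = sin ((real k + 1) * t) \<and>
   chebU (Suc k) (cos t) * sin t = sin ((real k + 2) * t)"
proof (induction k)
  case 0 then show ?case by (simp add: sin_double)
next
  case (Suc k)
  then show ?case using chebU_cos_step[of k t] by (simp add: add.commute add.left_commute)
qed

lemma chebU_cos: "chebU k (cos t) * sin t = sin ((real k + 1) * t)"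
  using chebU_cos2 by blast

lemma nat_sq2: "(a::nat)^2 = 2 * b^2 \<Longrightarrow> b = 0"
proof (induction b arbitrary: a rule: less_induct)
  case (less b)
  show ?case
  proof (rule ccontr)
    assume b0: "b \<noteq> 0"
    have "even (a^2)" using less.prems by simp
    then obtain c where c: "a = 2*c" by auto
    then have "b^2 = 2 * c^2" using less.prems by (simp add: power2_eq_square)
    then have "even (b^2)" by simp
    then obtain e where e: "b = 2*e" by auto
    then have "c^2 = 2 * e^2" using \<open>b^2 = 2 * c^2\<close> by (simp add: power2_eq_square)
    moreover have "e < b" using e b0 by simp
    ultimately have "e = 0" using less.IH by blast
    then show False using e b0 by simp
  qed
qed


definition Gk :: "nat \<Rightarrow> real \<Rightarrow> real" where
  "Gk k t = (if k = 0 then t/2 - sin (2*t)/4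
     else sin (real k * t) / (2 * real k) - sin ((real k + 2) * t) / (2 * (real k + 2)))"

lemma Gk_deriv: "(Gk k has_real_derivative sin ((real k + 1) * t) * sin t) (at t)"
proof (cases "k = 0")
  case True
  have "((\<lambda>t. t/2 - sin (2*t)/4) has_real_derivative (1/2 - cos (2*t) * 2 / 4)) (at t)"
    by (auto intro!: derivative_eq_intros)
  moreover have "1/2 - cos (2*t) * 2 / 4 = sin ((real k + 1) * t) * sin t"
    using True by (simp add: cos_double_sin power2_eq_square)
      (simp add: field_simps)
  ultimately show ?thesis using True unfolding Gk_def[abs_def] by simp
next
  case False
  have "((\<lambda>t. sin (real k * t) / (2 * real k) - sin ((real k + 2) * t) / (2 * (real k + 2)))
     has_real_derivative (cos (real k * t) * real k / (2 * real k) - cos ((real k + 2) * t) * (real k + 2) / (2 * (real k + 2)))) (at t)"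
    by (auto intro!: derivative_eq_intros)
  moreover have "cos (real k * t) * real k / (2 * real k) - cos ((real k + 2) * t) * (real k + 2) / (2 * (real k + 2))
     = sin ((real k + 1) * t) * sin t"
  proof -
    have a: "real k * t = (real k + 1) * t - t" and b: "(real k + 2) * t = (real k + 1) * t + t"
      by (simp_all add: algebra_simps)
    have "cos (real k * t) * real k / (2 * real k) - cos ((real k + 2) * t) * (real k + 2) / (2 * (real k + 2))
        = cos (real k * t) / 2 - cos ((real k + 2) * t) / 2" using False by (simp add: field_simps)
    also have "\<dots> = sin ((real k + 1) * t) * sin t"
      unfolding a b cos_add cos_diff by (simp add: field_simps)
    finally show ?thesis .
  qed
  ultimately show ?thesis using False unfolding Gk_def[abs_def] by simp
qed

lemma int_U: "((\<lambda>y. chebU k y * sqrt (1 - y\<^sup>2)) has_integral (if k = 0 then pi/2 else 0)) {-1..1}"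
proof -
  define F where "F y = - Gk k (arccos y)" for y
  have cG: "continuous_on UNIV (Gk k)"
    using Gk_deriv by (meson DERIV_isCont continuous_at_imp_continuous_on)
  have cF: "continuous_on {-1..1} F"
    unfolding F_def
    by (intro continuous_intros continuous_on_compose2[OF cG] continuous_on_arccos') auto
  have dF: "(F has_vector_derivative chebU k y * sqrt (1 - y\<^sup>2)) (at y)" if y: "y \<in> {-1<..<1}" for y
  proof -
    have s: "sin (arccos y) = sqrt (1 - y\<^sup>2)" using y by (simp add: sin_arccos)
    have sp: "sqrt (1 - y\<^sup>2) > 0" using y by (simp add: abs_square_less_1 abs_less_iff)
    have "(F has_real_derivative - (sin ((real k + 1) * arccos y) * sin (arccos y) * inverse (- sqrt (1 - y\<^sup>2)))) (at y)"
      unfolding F_def[abs_def]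
      by (intro DERIV_minus DERIV_chain2[OF Gk_deriv] DERIV_arccos) (use y in auto)
    moreover have "- (sin ((real k + 1) * arccos y) * sin (arccos y) * inverse (- sqrt (1 - y\<^sup>2)))
        = chebU k y * sqrt (1 - y\<^sup>2)"
    proof -
      have "chebU k y * sqrt (1 - y\<^sup>2) = chebU k (cos (arccos y)) * sin (arccos y)"
        using y s by simp
      also have "\<dots> = sin ((real k + 1) * arccos y)" by (rule chebU_cos)
      finally show ?thesis using s sp by (simp add: field_simps)
    qed
    ultimately show ?thesis by (simp add: has_real_derivative_iff_has_vector_derivative)
  qed
  have "((\<lambda>y. chebU k y * sqrt (1 - y\<^sup>2)) has_integral (F 1 - F (-1))) {-1..1}"
    by (rule fundamental_theorem_of_calculus_interior) (use cF dF in auto)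
  moreover have "F 1 - F (-1) = (if k = 0 then pi/2 else 0)"
  proof -
    have "F 1 - F (-1) = Gk k pi - Gk k 0" unfolding F_def by simp
    moreover have "sin (real k * pi) = 0" by (simp add: sin_zero_iff_int2)
    moreover have "sin ((real k + 2) * pi) = 0"
      using sin_npi[of "k+2"] by (simp add: algebra_simps)
    ultimately show ?thesis unfolding Gk_def by auto
  qed
  ultimately show ?thesis by simp
qed


lemma chebU_2y: "2 * y * chebU (Suc m) y = chebU (Suc (Suc m)) y + chebU m y" by simp

lemma chebU_prod2:
  "(\<forall>d. chebU i y * chebU (i+d) y = (\<Sum>r\<le>i. chebU (d+2*r) y)) \<and>
   (\<forall>d. chebU (Suc i) y * chebU (Suc i+d) y = (\<Sum>r\<le>Suc i. chebU (d+2*r) y))"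
proof (induction i)
  case 0
  show ?case by (auto simp: chebU_2y[of y, simplified] algebra_simps)
next
  case (Suc i)
  have IH1: "\<And>d. chebU i y * chebU (i+d) y = (\<Sum>r\<le>i. chebU (d+2*r) y)"
   and IH2: "\<And>d. chebU (Suc i) y * chebU (Suc i+d) y = (\<Sum>r\<le>Suc i. chebU (d+2*r) y)"
    using Suc by auto
  have "chebU (Suc (Suc i)) y * chebU (Suc (Suc i) + d) y
     = (\<Sum>r\<le>Suc (Suc i). chebU (d+2*r) y)" for d
  proof -
    have "chebU (Suc (Suc i)) y * chebU (Suc (Suc i) + d) y
       = 2 * y * (chebU (Suc i) y * chebU (Suc i + Suc d) y) - chebU i y * chebU (i + Suc (Suc d)) y"
      by (simp add: algebra_simps)
    also have "\<dots> = (\<Sum>r\<le>Suc i. 2 * y * chebU (Suc (d+2*r)) y) - (\<Sum>r\<le>i. chebU (Suc (Suc d)+2*r) y)"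
    proof -
      have 1: "chebU (Suc i) y * chebU (Suc i + Suc d) y = (\<Sum>r\<le>Suc i. chebU (Suc d+2*r) y)" by (rule IH2)
      have 2: "chebU i y * chebU (i + Suc (Suc d)) y = (\<Sum>r\<le>i. chebU (Suc (Suc d)+2*r) y)" by (rule IH1)
      show ?thesis unfolding 1 2 sum_distrib_left by simp
    qed
    also have "\<dots> = (\<Sum>r\<le>Suc i. chebU (Suc (Suc d)+2*r) y) + (\<Sum>r\<le>Suc i. chebU (d+2*r) y)
         - (\<Sum>r\<le>i. chebU (Suc (Suc d)+2*r) y)"
      by (simp only: chebU_2y sum.distrib add_Suc)
    also have "\<dots> = chebU (Suc (Suc d)+2*Suc i) y + (\<Sum>r\<le>Suc i. chebU (d+2*r) y)"
      by (simp only: sum.atMost_Suc[of _ i])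
    also have "\<dots> = (\<Sum>r\<le>Suc (Suc i). chebU (d+2*r) y)"
      by (simp add: sum.atMost_Suc[of _ "Suc i"] algebra_simps)
    finally show ?thesis .
  qed
  then show ?case using IH2 by blast
qed

lemma chebU_prod: "chebU i y * chebU (i+d) y = (\<Sum>r\<le>i. chebU (d+2*r) y)"
  using chebU_prod2 by blast

lemma orth_le: "((\<lambda>y. chebU p y * chebU (p+d) y * sqrt (1 - y\<^sup>2)) has_integral (if d = 0 then pi/2 else 0)) {-1..1}"
proof -
  have "((\<lambda>y. \<Sum>r\<le>p. chebU (d+2*r) y * sqrt (1 - y\<^sup>2)) has_integral
      (\<Sum>r\<le>p. if d+2*r = 0 then pi/2 else 0)) {-1..1}"
    by (rule has_integral_sum) (simp, rule int_U)
  moreover have "(\<Sum>r\<le>p. if d+2*r = 0 then pi/2 else (0::real)) = (if d = 0 then pi/2 else 0)"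
  proof -
    have "(\<lambda>r. if d+2*r = 0 then pi/2 else (0::real)) = (\<lambda>r. if r = 0 then (if d=0 then pi/2 else 0) else 0)"
      by auto
    then show ?thesis by simp
  qed
  moreover have "(\<Sum>r\<le>p. chebU (d+2*r) y * sqrt (1 - y\<^sup>2)) = chebU p y * chebU (p+d) y * sqrt (1 - y\<^sup>2)" for y
    by (simp add: chebU_prod sum_distrib_right)
  ultimately show ?thesis by simp
qed

lemma orth: "((\<lambda>y. chebU p y * chebU q y * sqrt (1 - y\<^sup>2)) has_integral (if p = q then pi/2 else 0)) {-1..1}"
proof (cases "p \<le> q")
  case True
  then have q: "q = p + (q - p)" by simp
  show ?thesis using orth_le[of p "q-p"] by (subst q, subst (2) q) simp
next
  case False
  then show ?thesis using orth_le[of q "p-q"] by (simp add: mult.commute)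
qed

lemma key:
  assumes "a \<le> b"
  shows "((\<lambda>y. (chebU a y * chebU (a+d) y) * (chebU b y * chebU (b+d) y) * sqrt (1 - y\<^sup>2))
     has_integral ((real a + 1) * pi / 2)) {-1..1}"
proof -
  have h1: "((\<lambda>y. \<Sum>r\<le>a. \<Sum>q\<le>b. chebU (d+2*r) y * chebU (d+2*q) y * sqrt (1 - y\<^sup>2)) has_integral
      (\<Sum>r\<le>a. \<Sum>q\<le>b. if d+2*r = d+2*q then pi/2 else 0)) {-1..1}"
    by (rule has_integral_sum) (simp, rule has_integral_sum, simp, rule orth)
  moreover have h2: "(\<Sum>r\<le>a. \<Sum>q\<le>b. if d+2*r = d+2*q then pi/2 else (0::real)) = (real a + 1) * pi / 2"
  proof -
    have inner: "(\<Sum>q\<le>b. if d+2*r = d+2*q then pi/2 else (0::real)) = pi/2" if "r \<le> a" for r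
    proof -
      have "(\<lambda>q. if d+2*r = d+2*q then pi/2 else (0::real)) = (\<lambda>q. if q = r then pi/2 else 0)"
        by auto
      then show ?thesis using that assms by simp
    qed
    have "(\<Sum>r\<le>a. \<Sum>q\<le>b. if d+2*r = d+2*q then pi/2 else (0::real)) = (\<Sum>r\<le>a. pi/2)"
      by (rule sum.cong[OF refl]) (rule inner, simp)
    then show ?thesis by simp
  qed
  moreover have h3: "(\<Sum>r\<le>a. \<Sum>q\<le>b. chebU (d+2*r) y * chebU (d+2*q) y * sqrt (1 - y\<^sup>2))
     = (chebU a y * chebU (a+d) y) * (chebU b y * chebU (b+d) y) * sqrt (1 - y\<^sup>2)" for y
    unfolding chebU_prod sum_product by (simp add: sum_distrib_right)
  ultimately show ?thesis by (simp only: h2 h3)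
qed

lemma Ckey:
  assumes "a \<le> b"
  shows "2 / pi * integral {-1..1} (\<lambda>y. (chebU a y * chebU (a+d) y) * (chebU b y * chebU (b+d) y) * sqrt (1 - y\<^sup>2))
     = real a + 1"
  using integral_unique[OF key[OF assms, of d]] by (simp add: field_simps)


lemma Cform: "Ccoef i j k m = 2 / pi * integral {-1..1}
   (\<lambda>y. (chebU i y * chebU j y) * (chebU k y * chebU m y) * sqrt (1 - y\<^sup>2))"
  unfolding Ccoef_def by (simp add: mult.assoc)

lemma C_aabb: "a \<le> b \<Longrightarrow> Ccoef a a b b = real a + 1"
  unfolding Cform using Ckey[of a b 0] by simp

lemma C_sym: "Ccoef a a b b = Ccoef b b a a"
  unfolding Ccoef_def by (simp add: ac_simps)

lemma C_cross:
  assumes "n \<le> g"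
  shows "Ccoef g (2*g-n) g n = real n + 1"
proof -
  have e1: "n + (g - n) = g" and e2: "g + (g - n) = 2*g - n" using assms by auto
  have "(\<lambda>y. (chebU g y * chebU (2*g-n) y) * (chebU g y * chebU n y) * sqrt (1 - y\<^sup>2))
      = (\<lambda>y. (chebU n y * chebU (n+(g-n)) y) * (chebU g y * chebU (g+(g-n)) y) * sqrt (1 - y\<^sup>2))"
    unfolding e1 e2 by (simp add: ac_simps)
  then show ?thesis unfolding Cform using Ckey[OF assms, of "g-n"] by simp
qed

theorem proposition7p2:
  fixes g :: nat
  shows "(\<forall>m::nat. m \<ge> 2*g + 1 \<longrightarrow>
            omega m ^ 2 * Ccoef g g g g - 2 * omega g ^ 2 * Ccoef g g m m \<noteq> 0)
         \<and> (\<forall>n::nat. n < g \<longrightarrow> Dcoef g n \<noteq> 0)"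
proof safe
  fix m :: nat
  assume m: "2*g + 1 \<le> m"
    and h: "omega m ^ 2 * Ccoef g g g g - 2 * omega g ^ 2 * Ccoef g g m m = 0"
  have "Ccoef g g g g = real g + 1" "Ccoef g g m m = real g + 1" using m by (simp_all add: C_aabb)
  with h have "(real m + 1)^2 * (real g + 1) = 2 * (real g + 1)^2 * (real g + 1)"
    unfolding omega_def by simp
  then have "(real m + 1)^2 = 2 * (real g + 1)^2" by simp
  then have "real ((m+1)^2) = real (2 * (g+1)^2)" by (simp add: add.commute)
  then have "(m+1)^2 = 2 * (g+1)^2" by (simp only: of_nat_eq_iff)
  then have "g + 1 = 0" by (rule nat_sq2)
  then show False by simp
next
  fix n :: nat
  assume n: "n < g" and h: "Dcoef g n = 0"
  define x where "x = real g"
  define z where "z = real n"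
  have c1: "Ccoef g g g g = x + 1" unfolding x_def by (simp add: C_aabb)
  have c2: "Ccoef g g n n = z + 1" unfolding z_def using n C_sym[of g n] C_aabb[of n g] by simp
  have c3: "Ccoef g g (2*g-n) (2*g-n) = x + 1" unfolding x_def using n by (simp add: C_aabb)
  have c4: "Ccoef g (2*g-n) g n = z + 1" unfolding z_def using n by (simp add: C_cross)
  have o: "omega (2*g-n) = 2*x - z + 1" "omega g = x + 1" "omega n = z + 1"
    unfolding omega_def x_def z_def using n by (simp_all add: of_nat_diff)
  have "Dcoef g n = - ((x+1)^2 * (z+1) * (x-z)^2 * (4*x - z + 3))"
    unfolding Dcoef_def c1 c2 c3 c4 o by (simp add: algebra_simps power2_eq_square power4_eq_xxxx)
  moreover have "(x+1)^2 * (z+1) * (x-z)^2 * (4*x - z + 3) \<noteq> 0"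
    using n unfolding x_def z_def by auto
  ultimately show False using h by simp
qed

end
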